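(* Let $\alpha\ge1$, $\rho\in[0,1]$ and $U\ge1$ be reals, and let $r:\mathbb R\to[0,\infty)$ be a nondecreasing, locally integrable function with $r(x)=0$ for $x<0$. For real $y$ let $\beta^{(y)}:=\frac{\alpha}{e^{\alpha}-1}\int_{y-1}^{y}r(x)e^{\alpha(y-x)}\,dx$, and define $$\mathrm{PRD}_a:=\int_{U-\rho}^{U}r(x)\,dx+\frac1\alpha\int_0^{U-\rho}r(x)\,dx-\frac1\alpha\int_0^{U-\rho}\beta^{(x)}\,dx+(1-\rho)\beta^{(U)}.$$ Then $$\mathrm{PRD}_a\le\int_{U-1}^{U-\rho}r(x)\phi_x\,dx+\int_{U-\rho}^{U}r(x)\psi_x\,dx+r(U-1)\,\Omega,$$ where $$\phi_x:=(1-\rho)\frac{\alpha}{e^{\alpha}-1}e^{\alpha(U-x)}+\frac1\alpha\cdot\frac{e^{\alpha}-e^{\alpha(U-\rho-x)}}{e^{\alpha}-1},\qquad \psi_x:=1+(1-\rho)\frac{\alpha}{e^{\alpha}-1}e^{\alpha(U-x)},$$ $$\Omega:=\frac1\alpha\cdot\frac{1}{e^{\alpha}-1}\left(\rho e^{\alpha}-\frac1\alpha\left(e^{\alpha}-e^{\alpha(1-\rho)}\right)\right).$$ *)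

theory Defs
  imports "HOL-Analysis.Analysis"
begin

definition beta_y :: "real \<Rightarrow> (real \<Rightarrow> real) \<Rightarrow> real \<Rightarrow> real" where
  "beta_y \<alpha> r y = \<alpha> / (exp \<alpha> - 1) * (LBINT x=y-1..y. r x * exp (\<alpha> * (y - x)))"

end

theory Submission imports Defs begin

lemma bnd_int:
  fixes g :: "real \<Rightarrow> real"
  assumes [measurable]: "g \<in> borel_measurable borel" and "\<And>x. x \<in> {a..b} \<Longrightarrow> \<bar>g x\<bar> \<le> B"
  shows "set_integrable lborel {a..b} g"
  unfolding set_integrable_def
  apply (rule integrableI_bounded_set_indicator[where B=B])
  using assms(2) by (auto simp: emeasure_lborel_Icc_eq)

lemma bnd_int_r:
  fixes g r :: "real \<Rightarrow> real"
  assumes "mono r" "\<And>x. r x \<ge> 0" and [measurable]: "g \<in> borel_measurable borel" and "\<And>x. x \<in> {a..b} \<Longrightarrow> \<bar>g x\<bar> \<le> B"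
  shows "set_integrable lborel {a..b} (\<lambda>x. r x * g x)"
proof -
  have [measurable]: "r \<in> borel_measurable borel" using assms(1) by (rule borel_measurable_mono)
  show ?thesis
  proof (rule bnd_int[where B="r b * B"])
    fix x assume x: "x \<in> {a..b}"
    have "\<bar>r x * g x\<bar> = r x * \<bar>g x\<bar>" using assms(2)[of x] by (simp add: abs_mult)
    also have "\<dots> \<le> r b * B"
      apply (rule mult_mono) using x assms(4)[OF x] assms(2) monoD[OF assms(1), of x b] by auto
    finally show "\<bar>r x * g x\<bar> \<le> r b * B" .
  qed measurable
qed

lemma split_Icc:
  fixes f :: "real \<Rightarrow> real"
  assumes "a \<le> b" "b \<le> c" "set_integrable lborel {a..c} f"
  shows "(LBINT x:{a..c}. f x) = (LBINT x:{a..b}. f x) + (LBINT x:{b..c}. f x)"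
proof -
  have "interval_lebesgue_integrable lborel (ereal a) (ereal c) f"
    unfolding interval_lebesgue_integrable_def using assms
    by (auto intro: set_integrable_subset)
  hence "(LBINT x=ereal a..ereal b. f x) + (LBINT x=ereal b..ereal c. f x) = (LBINT x=ereal a..ereal c. f x)"
    using assms by (intro interval_integral_sum) (simp add: min_def max_def)
  thus ?thesis using assms by (simp add: interval_integral_Icc)
qed

lemma key:
  fixes \<alpha> V :: real and r :: "real \<Rightarrow> real"
  assumes a1: "\<alpha> \<ge> 1" and V0: "0 \<le> V"
    and rpos: "\<And>x. r x \<ge> 0" and mono: "mono r"
    and r0: "\<And>x. x < 0 \<Longrightarrow> r x = 0"
  shows "(LBINT y:{0..V}. beta_y \<alpha> r y) =
     (LBINT x:{0..V}. r x * (1 - max 0 ((exp \<alpha> - exp (\<alpha> * (V - x))) / (exp \<alpha> - 1))))"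
proof -
  have [measurable]: "r \<in> borel_measurable borel" using mono by (rule borel_measurable_mono)
  have E1: "exp \<alpha> > 1" using a1 by simp
  define c where "c = \<alpha> / (exp \<alpha> - 1)"
  have c0: "c > 0" using E1 a1 by (simp add: c_def)
  define G where "G x y = (if 0 \<le> y \<and> y \<le> V \<and> y - 1 \<le> x \<and> x \<le> y then c * r x * exp (\<alpha> * (y - x)) else 0)" for x y
  have Gm[measurable]: "case_prod G \<in> borel_measurable (lborel \<Otimes>\<^sub>M lborel)"
    unfolding G_def by measurable
  have Gint: "integrable (lborel \<Otimes>\<^sub>M lborel) (case_prod G)"
  proof (rule integrableI_bounded_set[where A="{-1..V} \<times> {0..V}" and B="c * r V * exp \<alpha>"])
    show "{-1..V} \<times> {0..V} \<in> sets (lborel \<Otimes>\<^sub>M lborel)" by measurable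
    show "emeasure (lborel \<Otimes>\<^sub>M lborel) ({-1..V} \<times> {0..V}) < \<infinity>"
      by (subst lborel.emeasure_pair_measure_Times) (auto simp: emeasure_lborel_Icc_eq ennreal_mult_less_top)
    show "AE x in lborel \<Otimes>\<^sub>M lborel. x \<in> {-1..V} \<times> {0..V} \<longrightarrow> norm (case_prod G x) \<le> c * r V * exp \<alpha>"
    proof (rule AE_I2, rule impI)
      fix z :: "real \<times> real"
      obtain x y where z_eq: "z = (x, y)" by (cases z)
      have "norm (G x y) \<le> c * r V * exp \<alpha>"
      proof (cases "0 \<le> y \<and> y \<le> V \<and> y - 1 \<le> x \<and> x \<le> y")
        case True
        have "r x \<le> r V" using True monoD[OF mono, of x V] by auto
        moreover have "exp (\<alpha> * (y - x)) \<le> exp \<alpha>" using True a1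
          by (simp add: mult_left_le)
        ultimately have "r x * exp (\<alpha> * (y - x)) \<le> r V * exp \<alpha>"
          by (intro mult_mono) (auto simp: rpos)
        thus ?thesis using True c0 rpos[of x] by (simp add: G_def abs_mult mult.assoc)
      next
        case False
        thus ?thesis using c0 rpos[of V] by (auto simp: G_def)
      qed
      thus "norm (case_prod G z) \<le> c * r V * exp \<alpha>" by (simp add: z_eq)
    qed
    show "AE x in lborel \<Otimes>\<^sub>M lborel. x \<notin> {-1..V} \<times> {0..V} \<longrightarrow> case_prod G x = 0"
      by (rule AE_I2) (auto simp: G_def split: if_splits)
  qed measurable
  have 1: "(LBINT y:{0..V}. beta_y \<alpha> r y) = (\<integral>y. (\<integral>x. G x y \<partial>lborel) \<partial>lborel)"
  proof -
    have "\<And>y. indicator {0..V} y * beta_y \<alpha> r y = (\<integral>x. G x y \<partial>lborel)"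
    proof -
      fix y
      have "indicator {0..V} y * beta_y \<alpha> r y =
        (\<integral>x. indicator {0..V} y * c * (indicator {y-1..y} x * (r x * exp (\<alpha> * (y - x)))) \<partial>lborel)"
        unfolding beta_y_def c_def[symmetric]
        by (simp add: interval_integral_Icc set_lebesgue_integral_def)
      also have "\<dots> = (\<integral>x. G x y \<partial>lborel)"
        by (rule Bochner_Integration.integral_cong) (auto simp: G_def indicator_def)
      finally show "indicator {0..V} y * beta_y \<alpha> r y = (\<integral>x. G x y \<partial>lborel)" .
    qed
    thus ?thesis by (simp add: set_lebesgue_integral_def)
  qed
  have 2: "(\<integral>y. (\<integral>x. G x y \<partial>lborel) \<partial>lborel) = (\<integral>x. (\<integral>y. G x y \<partial>lborel) \<partial>lborel)"
    by (rule lborel_pair.Fubini_integral[OF Gint])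
  have 3: "(\<integral>y. G x y \<partial>lborel) = indicator {0..V} x * (r x * (1 - max 0 ((exp \<alpha> - exp (\<alpha> * (V - x))) / (exp \<alpha> - 1))))" for x
  proof (cases "x < 0 \<or> x > V")
    case True
    have "G x y = 0" for y using True r0[of x] by (auto simp: G_def)
    then show ?thesis using True r0[of x] by (auto simp: indicator_def)
  next
    case False
    define t where "t = min V (x + 1)"
    have xt: "x \<le> t" using False by (simp add: t_def)
    have "(\<integral>y. G x y \<partial>lborel) = (\<integral>y. c * r x * (indicator {x..t} y *\<^sub>R exp (\<alpha> * (y - x))) \<partial>lborel)"
      by (rule Bochner_Integration.integral_cong) (use False in \<open>auto simp: G_def indicator_def t_def\<close>)
    also have "\<dots> = c * r x * (\<integral>y. indicator {x..t} y *\<^sub>R exp (\<alpha> * (y - x)) \<partial>lborel)"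
      by simp
    also have "(\<integral>y. indicator {x..t} y *\<^sub>R exp (\<alpha> * (y - x)) \<partial>lborel) = exp (\<alpha> * (t - x)) / \<alpha> - exp (\<alpha> * (x - x)) / \<alpha>"
    proof (rule integral_FTC_atLeastAtMost[OF xt])
      fix y
      have "((\<lambda>y. exp (\<alpha> * (y - x)) / \<alpha>) has_real_derivative exp (\<alpha> * (y - x))) (at y within {x..t})"
        using a1 by (auto intro!: derivative_eq_intros)
      thus "((\<lambda>y. exp (\<alpha> * (y - x)) / \<alpha>) has_vector_derivative exp (\<alpha> * (y - x))) (at y within {x..t})"
        by (simp add: has_real_derivative_iff_has_vector_derivative)
    qed (intro continuous_intros)
    also have "c * r x * (exp (\<alpha> * (t - x)) / \<alpha> - exp (\<alpha> * (x - x)) / \<alpha>)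
       = indicator {0..V} x * (r x * (1 - max 0 ((exp \<alpha> - exp (\<alpha> * (V - x))) / (exp \<alpha> - 1))))"
    proof (cases "V - x \<ge> 1")
      case True
      hence t: "t = x + 1" by (simp add: t_def)
      have "exp \<alpha> \<le> exp (\<alpha> * (V - x))" using True a1 by (simp add: mult_le_cancel_left1)
      hence "max 0 ((exp \<alpha> - exp (\<alpha> * (V - x))) / (exp \<alpha> - 1)) = 0" using E1
        by (simp add: divide_le_0_iff)
      thus ?thesis using False E1 a1 unfolding t c_def by (simp add: field_simps)
    next
      case nt: False
      hence t: "t = V" by (simp add: t_def)
      have "exp (\<alpha> * (V - x)) \<le> exp \<alpha>" using nt a1 by (simp add: mult_le_cancel_left1)
      hence mx: "max 0 ((exp \<alpha> - exp (\<alpha> * (V - x))) / (exp \<alpha> - 1)) = (exp \<alpha> - exp (\<alpha> * (V - x))) / (exp \<alpha> - 1)" using E1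
        by simp
      show ?thesis using False E1 a1 unfolding t c_def mx by (simp add: field_simps)
    qed
    finally show ?thesis .
  qed
  show ?thesis unfolding 1 2 3 by (simp add: set_lebesgue_integral_def)
qed

lemma cont_int_r:
  fixes g r :: "real \<Rightarrow> real"
  assumes "mono r" "\<And>x. r x \<ge> 0" and g: "continuous_on UNIV g"
  shows "set_integrable lborel {a..b} (\<lambda>x. r x * g x)"
proof -
  have "bounded (g ` {a..b})"
    by (rule compact_imp_bounded[OF compact_continuous_image[OF continuous_on_subset[OF g] compact_Icc]]) simp
  then obtain B where B: "\<forall>y\<in>g ` {a..b}. norm y \<le> B" unfolding Elementary_Metric_Spaces.bounded_iff by auto
  show ?thesis
    by (rule bnd_int_r[OF assms(1,2) borel_measurable_continuous_onI[OF g], where B=B]) (use B in auto)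
qed

lemma cont_int:
  fixes g :: "real \<Rightarrow> real"
  assumes g: "continuous_on UNIV g"
  shows "set_integrable lborel {a..b} g"
  using cont_int_r[of "\<lambda>_. 1" g a b] g by (simp add: mono_def)

lemma arithOm:
  fixes E X a U \<rho> :: real
  assumes "E \<noteq> 1" "a \<noteq> 0"
  shows "(E * (U - 1) + X / a) * (1 / (E - 1)) - (E * (U - \<rho> - 1) + E / a) * (1 / (E - 1))
       = a * (1/a * (1 / (E - 1)) * (\<rho> * E - 1/a * (E - X)))"
proof -
  have n: "(E * (U - 1) + X / a) - (E * (U - \<rho> - 1) + E / a) = \<rho> * E - 1/a * (E - X)"
    using assms by (simp add: field_simps)
  have "(E * (U - 1) + X / a) * (1 / (E - 1)) - (E * (U - \<rho> - 1) + E / a) * (1 / (E - 1))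
      = ((E * (U - 1) + X / a) - (E * (U - \<rho> - 1) + E / a)) * (1 / (E - 1))"
    by (simp only: left_diff_distrib)
  also have "\<dots> = (\<rho> * E - 1/a * (E - X)) * (1 / (E - 1))" by (simp only: n)
  also have "\<dots> = a * (1/a * (1 / (E - 1)) * (\<rho> * E - 1/a * (E - X)))"
    using assms by simp
  finally show ?thesis .
qed

lemma derivF:
  fixes a U \<rho> x :: real and S :: "real set"
  assumes "exp a > 1" "a \<ge> 1"
  shows "((\<lambda>x. (exp a * x + exp (a * (U - \<rho> - x)) / a) * (1 / (exp a - 1))) has_real_derivative ((exp a - exp (a * (U - \<rho> - x))) / (exp a - 1)))
               (at x within S)"
proof -
  have ne: "exp a - 1 \<noteq> 0" "a \<noteq> 0" using assms by auto
  show ?thesis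
    by (rule derivative_eq_intros refl | use ne in \<open>simp add: field_simps\<close>)+
qed

theorem lemmaB3:
  fixes \<alpha> \<rho> U :: real and r :: "real \<Rightarrow> real"
  assumes "\<alpha> \<ge> 1" and "0 \<le> \<rho>" and "\<rho> \<le> 1" and "U \<ge> 1"
    and "\<And>x. r x \<ge> 0"
    and "mono r"
    and "\<And>a b. set_integrable lborel {a..b} r"
    and "\<And>x. x < 0 \<Longrightarrow> r x = 0"
  shows "(LBINT x=U-\<rho>..U. r x) + 1/\<alpha> * (LBINT x=0..U-\<rho>. r x)
           - 1/\<alpha> * (LBINT x=0..U-\<rho>. beta_y \<alpha> r x) + (1 - \<rho>) * beta_y \<alpha> r U
         \<le> (LBINT x=U-1..U-\<rho>. r x * ((1 - \<rho>) * (\<alpha> / (exp \<alpha> - 1)) * exp (\<alpha> * (U - x))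
                 + 1/\<alpha> * ((exp \<alpha> - exp (\<alpha> * (U - \<rho> - x))) / (exp \<alpha> - 1))))
           + (LBINT x=U-\<rho>..U. r x * (1 + (1 - \<rho>) * (\<alpha> / (exp \<alpha> - 1)) * exp (\<alpha> * (U - x))))
           + r (U - 1) * (1/\<alpha> * (1 / (exp \<alpha> - 1)) *
                 (\<rho> * exp \<alpha> - 1/\<alpha> * (exp \<alpha> - exp (\<alpha> * (1 - \<rho>)))))"
proof -
  note a1 = assms(1) and rpos = assms(5) and mono = assms(6) and rint = assms(7) and r0 = assms(8)
  have E1: "exp \<alpha> > 1" using a1 by simp
  have o1: "0 \<le> U - \<rho>" "U - 1 \<le> U - \<rho>" "U - \<rho> \<le> U" "0 \<le> U - 1" "U - 1 \<le> U"
    using assms by auto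
  define P where "P x = (1 - \<rho>) * (\<alpha> / (exp \<alpha> - 1)) * exp (\<alpha> * (U - x))" for x
  define w where "w x = (exp \<alpha> - exp (\<alpha> * (U - \<rho> - x))) / (exp \<alpha> - 1)" for x
  define m where "m x = max 0 (w x)" for x
  define \<Omega> where "\<Omega> = 1/\<alpha> * (1 / (exp \<alpha> - 1)) * (\<rho> * exp \<alpha> - 1/\<alpha> * (exp \<alpha> - exp (\<alpha> * (1 - \<rho>))))"
  have cP: "continuous_on UNIV P" unfolding P_def by (intro continuous_intros)
  have cw: "continuous_on UNIV w" unfolding w_def using E1 by (intro continuous_intros) auto
  have cm: "continuous_on UNIV m" unfolding m_def by (intro continuous_intros cw)
  have iP: "set_integrable lborel {a..b} (\<lambda>x. r x * P x)" for a b by (rule cont_int_r[OF mono rpos cP])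
  have iw: "set_integrable lborel {a..b} (\<lambda>x. r x * w x)" for a b by (rule cont_int_r[OF mono rpos cw])
  have im: "set_integrable lborel {a..b} (\<lambda>x. r x * m x)" for a b by (rule cont_int_r[OF mono rpos cm])
  have im': "set_integrable lborel {a..b} m" for a b by (rule cont_int[OF cm])
  have iP1: "set_integrable lborel {a..b} (\<lambda>x. r x * (1 - m x))" for a b
    by (rule cont_int_r[OF mono rpos, of "\<lambda>x. 1 - m x"]) (intro continuous_intros cm)
  define A1 where "A1 = (LBINT x:{U-\<rho>..U}. r x)"
  define R where "R = (LBINT x:{0..U-\<rho>}. r x)"
  define Bi where "Bi = (LBINT x:{0..U-\<rho>}. beta_y \<alpha> r x)"
  define Q1 where "Q1 = (LBINT x:{U-1..U-\<rho>}. r x * P x)"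
  define Q2 where "Q2 = (LBINT x:{U-\<rho>..U}. r x * P x)"
  define W1 where "W1 = (LBINT x:{U-1..U-\<rho>}. r x * w x)"
  have e1: "(LBINT x:{U-1..U-\<rho>}. r x * (P x + 1/\<alpha> * w x)) = Q1 + 1/\<alpha> * W1"
  proof -
    have "(LBINT x:{U-1..U-\<rho>}. r x * (P x + 1/\<alpha> * w x)) = (LBINT x:{U-1..U-\<rho>}. r x * P x + 1/\<alpha> * (r x * w x))"
      by (simp add: algebra_simps)
    also have "\<dots> = Q1 + 1/\<alpha> * W1" unfolding Q1_def W1_def
      by (subst set_integral_add(2)) (use iP iw in auto)
    finally show ?thesis .
  qed
  have e2: "(LBINT x:{U-\<rho>..U}. r x * (1 + P x)) = A1 + Q2"
  proof -
    have "(LBINT x:{U-\<rho>..U}. r x * (1 + P x)) = (LBINT x:{U-\<rho>..U}. r x + r x * P x)"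
      by (simp add: algebra_simps)
    also have "\<dots> = A1 + Q2" unfolding A1_def Q2_def
      by (subst set_integral_add(2)) (use iP rint in auto)
    finally show ?thesis .
  qed
  have e3: "(1 - \<rho>) * beta_y \<alpha> r U = Q1 + Q2"
  proof -
    have fe: "(\<lambda>x. r x * P x) = (\<lambda>x. ((1 - \<rho>) * (\<alpha> / (exp \<alpha> - 1))) * (r x * exp (\<alpha> * (U - x))))"
      by (auto simp: P_def fun_eq_iff)
    have bU: "beta_y \<alpha> r U = \<alpha> / (exp \<alpha> - 1) * (LBINT x:{U-1..U}. r x * exp (\<alpha> * (U - x)))"
      unfolding beta_y_def using o1 by (simp only: interval_integral_Icc)
    have "(1 - \<rho>) * beta_y \<alpha> r U = (LBINT x:{U-1..U}. r x * P x)"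
      unfolding fe set_integral_mult_right bU by simp
    also have "\<dots> = Q1 + Q2" unfolding Q1_def Q2_def by (rule split_Icc[OF o1(2,3) iP])
    finally show ?thesis .
  qed
  have e4: "R - Bi = (LBINT x:{0..U-\<rho>}. r x * m x)"
  proof -
    have "Bi = (LBINT x:{0..U-\<rho>}. r x * (1 - m x))"
      unfolding Bi_def m_def w_def by (rule key[OF a1 o1(1) rpos mono r0])
    hence "R - Bi = (LBINT x:{0..U-\<rho>}. r x - r x * (1 - m x))" unfolding R_def
      by (subst set_integral_diff(2)) (use rint iP1 in auto)
    thus ?thesis by (simp add: algebra_simps)
  qed
  have wpos: "w x \<ge> 0" if "x \<ge> U - \<rho> - 1" for x
  proof -
    have "exp (\<alpha> * (U - \<rho> - x)) \<le> exp \<alpha>" using that a1 by (simp add: mult_le_cancel_left1)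
    thus ?thesis using E1 by (simp add: w_def)
  qed
  have wneg: "w x \<le> 0" if "x \<le> U - \<rho> - 1" for x
  proof -
    have "exp \<alpha> \<le> exp (\<alpha> * (U - \<rho> - x))" using that a1 by (simp add: mult_le_cancel_left1)
    thus ?thesis using E1 by (simp add: w_def divide_le_0_iff)
  qed
  have mpos: "m x \<ge> 0" for x by (simp add: m_def)
  have ineq: "(LBINT x:{0..U-\<rho>}. r x * m x) \<le> W1 + r (U - 1) * (\<alpha> * \<Omega>)"
  proof -
    have s1: "(LBINT x:{0..U-\<rho>}. r x * m x) = (LBINT x:{0..U-1}. r x * m x) + (LBINT x:{U-1..U-\<rho>}. r x * m x)"
      by (rule split_Icc[OF o1(4) o1(2) im])
    have mw: "m x = w x" if "U - 1 \<le> x" for x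
      using wpos[of x] that assms(2) by (simp add: m_def)
    have s2: "(LBINT x:{U-1..U-\<rho>}. r x * m x) = W1" unfolding W1_def
      by (rule set_lebesgue_integral_cong) (use mw in auto)
    have s3: "(LBINT x:{0..U-1}. r x * m x) \<le> (LBINT x:{0..U-1}. r (U - 1) * m x)"
    proof (rule set_integral_mono[OF im])
      show "set_integrable lborel {0..U - 1} (\<lambda>x. r (U - 1) * m x)" using im' by auto
      fix x assume "x \<in> {0..U-1}"
      hence "r x \<le> r (U - 1)" using monoD[OF mono, of x "U - 1"] by auto
      thus "r x * m x \<le> r (U - 1) * m x" by (rule mult_right_mono[OF _ mpos])
    qed
    have s5: "(LBINT x:{0..U-1}. m x) \<le> (LBINT x:{U-\<rho>-1..U-1}. m x)"
      unfolding set_lebesgue_integral_def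
    proof (rule integral_mono)
      show "integrable lborel (\<lambda>x. indicator {0..U - 1} x *\<^sub>R m x)"
        using im' unfolding set_integrable_def by auto
      show "integrable lborel (\<lambda>x. indicator {U-\<rho>-1..U - 1} x *\<^sub>R m x)"
        using im' unfolding set_integrable_def by auto
      fix x
      show "indicator {0..U - 1} x *\<^sub>R m x \<le> indicator {U-\<rho>-1..U - 1} x *\<^sub>R m x"
      proof (cases "x \<le> U - \<rho> - 1")
        case True
        hence "m x = 0" using wneg[OF True] by (simp add: m_def)
        thus ?thesis by simp
      next
        case False
        thus ?thesis using mpos[of x] by (auto simp: indicator_def)
      qed
    qed
    have s6: "(LBINT x:{U-\<rho>-1..U-1}. m x) = \<alpha> * \<Omega>"
    proof -
      have "(LBINT x:{U-\<rho>-1..U-1}. m x) = (LBINT x:{U-\<rho>-1..U-1}. w x)"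
        by (rule set_lebesgue_integral_cong) (use wpos in \<open>auto simp: m_def\<close>)
      also have "\<dots> = (exp \<alpha> * (U - 1) + exp (\<alpha> * (U - \<rho> - (U - 1))) / \<alpha>) * (1 / (exp \<alpha> - 1))
                     - (exp \<alpha> * (U - \<rho> - 1) + exp (\<alpha> * (U - \<rho> - (U - \<rho> - 1))) / \<alpha>) * (1 / (exp \<alpha> - 1))"
        unfolding set_lebesgue_integral_def
      proof (rule integral_FTC_atLeastAtMost)
        show "U - \<rho> - 1 \<le> U - 1" using assms by simp
        show "continuous_on {U - \<rho> - 1..U - 1} w" using cw by (rule continuous_on_subset) simp
        fix x
        have "((\<lambda>x. (exp \<alpha> * x + exp (\<alpha> * (U - \<rho> - x)) / \<alpha>) * (1 / (exp \<alpha> - 1))) has_real_derivative w x)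
               (at x within {U - \<rho> - 1..U - 1})"
          unfolding w_def by (rule derivF[OF E1 a1])
        thus "((\<lambda>x. (exp \<alpha> * x + exp (\<alpha> * (U - \<rho> - x)) / \<alpha>) * (1 / (exp \<alpha> - 1))) has_vector_derivative w x)
               (at x within {U - \<rho> - 1..U - 1})"
          by (simp add: has_real_derivative_iff_has_vector_derivative)
      qed
      also have "\<dots> = \<alpha> * \<Omega>"
      proof -
        have "U - \<rho> - (U - 1) = 1 - \<rho>" "U - \<rho> - (U - \<rho> - 1) = 1" by simp_all
        thus ?thesis unfolding \<Omega>_def using arithOm[of "exp \<alpha>" \<alpha> U "exp (\<alpha> * (1 - \<rho>))" \<rho>] E1 a1 by simp
      qed
      finally show ?thesis .
    qed
    have "(LBINT x:{0..U-1}. r x * m x) \<le> r (U - 1) * (LBINT x:{0..U-1}. m x)"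
      using s3 by simp
    also have "\<dots> \<le> r (U - 1) * (\<alpha> * \<Omega>)"
      unfolding s6[symmetric] by (rule mult_left_mono[OF s5 rpos])
    finally show ?thesis using s1 s2 by linarith
  qed
  have lhs: "(LBINT x=U-\<rho>..U. r x) + 1/\<alpha> * (LBINT x=0..U-\<rho>. r x)
           - 1/\<alpha> * (LBINT x=0..U-\<rho>. beta_y \<alpha> r x) + (1 - \<rho>) * beta_y \<alpha> r U
       = A1 + 1/\<alpha> * (R - Bi) + (Q1 + Q2)"
  proof -
    have z0: "(LBINT x=0..U-\<rho>. f x) = (LBINT x:{0..U-\<rho>}. f x)" for f :: "real \<Rightarrow> real"
      using interval_integral_Icc[of 0 "U-\<rho>" f] o1 by (simp add: zero_ereal_def)
    show ?thesis
      unfolding A1_def R_def Bi_def e3[symmetric] z0 using o1 by (simp only: interval_integral_Icc) (simp add: algebra_simps)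
  qed
  have rhs: "(LBINT x=U-1..U-\<rho>. r x * ((1 - \<rho>) * (\<alpha> / (exp \<alpha> - 1)) * exp (\<alpha> * (U - x))
                 + 1/\<alpha> * ((exp \<alpha> - exp (\<alpha> * (U - \<rho> - x))) / (exp \<alpha> - 1))))
           + (LBINT x=U-\<rho>..U. r x * (1 + (1 - \<rho>) * (\<alpha> / (exp \<alpha> - 1)) * exp (\<alpha> * (U - x))))
           + r (U - 1) * (1/\<alpha> * (1 / (exp \<alpha> - 1)) *
                 (\<rho> * exp \<alpha> - 1/\<alpha> * (exp \<alpha> - exp (\<alpha> * (1 - \<rho>)))))
       = Q1 + 1/\<alpha> * W1 + (A1 + Q2) + r (U - 1) * \<Omega>"
    unfolding e1[symmetric] e2[symmetric] \<Omega>_def P_def w_def using o1 by (simp add: interval_integral_Icc)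
  have "1/\<alpha> * (R - Bi) \<le> 1/\<alpha> * (W1 + r (U - 1) * (\<alpha> * \<Omega>))"
    unfolding e4 by (rule mult_left_mono[OF ineq]) (use a1 in simp)
  also have "\<dots> = 1/\<alpha> * W1 + r (U - 1) * \<Omega>" using a1 by (simp add: field_simps)
  finally have "1/\<alpha> * (R - Bi) \<le> 1/\<alpha> * W1 + r (U - 1) * \<Omega>" .
  thus ?thesis unfolding lhs rhs by linarith
qed

end
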